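(* Let $q$ be a prime power and $n\ge1$. For $i=1,2$, let $\mathcal{C}_i$ be a $[2n,n,d_i]_q$ linear code with generator matrix $G_i=(I_n\ \ f_i(A_i))$, where $f_i(x)\in\mathbb{F}_q[x]$ and $A_i$ is an $n\times n$ Toeplitz matrix over $\mathbb{F}_q$. Then there exists a $[4n,2n,\min\{d_1,d_2\}]_q$ linear code which is formally self-dual with respect to the Euclidean inner product and (when $q$ is an even power of a prime) with respect to the Hermitian inner product.
   Context: A Toeplitz matrix is a square matrix whose diagonals parallel to the main diagonal each have constant entries. Euclidean inner product $\sum_i x_iy_i$; for $q=p^h$ with $h$ even, Hermitian inner product $\sum_i x_iy_i^{\sqrt q}$. A code is formally self-dual (FSD) with respect to an inner product if it has the same weight distribution as its dual code with respect to that inner product. *)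

theory Defs
  imports "HOL-Computational_Algebra.Polynomial" "HOL-Computational_Algebra.Primes"
    "Jordan_Normal_Form.VS_Connect"
begin

definition is_toeplitz :: "'a mat \<Rightarrow> nat \<Rightarrow> bool" where
  "is_toeplitz A n \<longleftrightarrow> A \<in> carrier_mat n n \<and>
     (\<forall>i j i' j'. i < n \<longrightarrow> j < n \<longrightarrow> i' < n \<longrightarrow> j' < n \<longrightarrow>
        int j - int i = int j' - int i' \<longrightarrow> A $$ (i, j) = A $$ (i', j'))"

definition poly_mat :: "'a::comm_ring_1 poly \<Rightarrow> 'a mat \<Rightarrow> 'a mat" where
  "poly_mat f A = mat (dim_row A) (dim_row A)
     (\<lambda>(i, j). \<Sum>k\<le>degree f. coeff f k * (A ^\<^sub>m k) $$ (i, j))"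

definition id_append :: "nat \<Rightarrow> 'a::{zero,one} mat \<Rightarrow> 'a mat" where
  "id_append n B = mat n (2 * n) (\<lambda>(i, j). if j < n then (if i = j then 1 else 0) else B $$ (i, j - n))"

text \<open>Code generated by a k x N generator matrix G: all u G with u in F^k.\<close>
definition gen_code :: "'a::comm_ring_1 mat \<Rightarrow> 'a vec set" where
  "gen_code G = {G\<^sup>T *\<^sub>v u | u. u \<in> carrier_vec (dim_row G)}"

definition linear_code :: "nat \<Rightarrow> nat \<Rightarrow> 'a::field vec set \<Rightarrow> bool" where
  "linear_code N k C \<longleftrightarrow> subspace class_ring C (module_vec TYPE('a) N) \<and>
     vectorspace.dim class_ring ((module_vec TYPE('a) N)\<lparr>carrier := C\<rparr>) = k"

definition hweight :: "'a::zero vec \<Rightarrow> nat" where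
  "hweight v = card {i. i < dim_vec v \<and> v $ i \<noteq> 0}"

definition min_dist :: "'a::zero vec set \<Rightarrow> nat" where
  "min_dist C = Min {hweight c | c. c \<in> C \<and> c \<noteq> 0\<^sub>v (dim_vec c)}"

definition weight_distribution :: "'a::zero vec set \<Rightarrow> nat \<Rightarrow> nat" where
  "weight_distribution C w = card {c \<in> C. hweight c = w}"

definition euclid_dual :: "nat \<Rightarrow> 'a::comm_ring_1 vec set \<Rightarrow> 'a vec set" where
  "euclid_dual N C = {y \<in> carrier_vec N. \<forall>x\<in>C. (\<Sum>i<N. x $ i * y $ i) = 0}"

text \<open>Hermitian dual, r = sqrt q.\<close>
definition herm_dual :: "nat \<Rightarrow> nat \<Rightarrow> 'a::comm_ring_1 vec set \<Rightarrow> 'a vec set" where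
  "herm_dual r N C = {y \<in> carrier_vec N. \<forall>x\<in>C. (\<Sum>i<N. x $ i * (y $ i) ^ r) = 0}"

definition fsd_euclid :: "nat \<Rightarrow> 'a::comm_ring_1 vec set \<Rightarrow> bool" where
  "fsd_euclid N C \<longleftrightarrow> (\<forall>w. weight_distribution C w = weight_distribution (euclid_dual N C) w)"

definition fsd_herm :: "nat \<Rightarrow> nat \<Rightarrow> 'a::comm_ring_1 vec set \<Rightarrow> bool" where
  "fsd_herm r N C \<longleftrightarrow> (\<forall>w. weight_distribution C w = weight_distribution (herm_dual r N C) w)"

end

theory Submission
  imports Defs "Jordan_Normal_Form.Missing_VectorSpace"
begin

lemma lin_img_code:
  fixes L :: "'a::field vec \<Rightarrow> 'a vec"
  assumes car: "\<And>u. u \<in> carrier_vec k \<Longrightarrow> L u \<in> carrier_vec N"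
    and add: "\<And>u v. u \<in> carrier_vec k \<Longrightarrow> v \<in> carrier_vec k \<Longrightarrow> L (u + v) = L u + L v"
    and sm: "\<And>a u. u \<in> carrier_vec k \<Longrightarrow> L (a \<cdot>\<^sub>v u) = a \<cdot>\<^sub>v L u"
    and inj: "inj_on L (carrier_vec k)"
  shows "linear_code N k (L ` carrier_vec k)"
proof -
  interpret V: vec_space "TYPE('a)" k .
  interpret W: vec_space "TYPE('a)" N .
  interpret lm: linear_map class_ring "module_vec TYPE('a) k" "module_vec TYPE('a) N" L
  proof (unfold_locales)
    show "L \<in> LinearCombinations.module_hom class_ring (module_vec TYPE('a) k) (module_vec TYPE('a) N)"
      unfolding LinearCombinations.module_hom_def using car add sm by (auto simp: module_vec_simps)
  qed
  have im: "lm.imT = L ` carrier_vec k" unfolding lm.im_def by (simp add: module_vec_simps)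
  have "vectorspace.dim class_ring (W.vs lm.imT) + vectorspace.dim class_ring (V.vs lm.kerT) = V.dim"
    by (rule lm.rank_nullity_main(1)) simp
  moreover have "vectorspace.dim class_ring (V.vs lm.kerT) = 0"
    by (rule lm.inj_imp_dim_ker0) (use inj in \<open>simp add: module_vec_simps\<close>)
  ultimately have "vectorspace.dim class_ring (W.vs lm.imT) = k" using V.dim_is_n by simp
  moreover have "subspace class_ring lm.imT (module_vec TYPE('a) N)" by (rule lm.imT_is_subspace)
  ultimately show ?thesis unfolding linear_code_def im by simp
qed

definition cw :: "nat \<Rightarrow> 'a::comm_ring_1 mat \<Rightarrow> 'a vec \<Rightarrow> 'a vec" where
  "cw n M u = vec (2*n) (\<lambda>i. if i < n then u $ i else (\<Sum>k<n. u $ k * M $$ (k, i - n)))"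

definition dcw :: "nat \<Rightarrow> 'a::comm_ring_1 mat \<Rightarrow> 'a vec \<Rightarrow> 'a vec" where
  "dcw n M b = vec (2*n) (\<lambda>i. if i < n then - (\<Sum>j<n. M $$ (i, j) * b $ j) else b $ (i - n))"

definition persym :: "nat \<Rightarrow> 'a mat \<Rightarrow> bool" where
  "persym n M \<longleftrightarrow> (\<forall>i<n. \<forall>j<n. M $$ (i, j) = M $$ (n - 1 - j, n - 1 - i))"

lemma sum_mult_delta[simp]: "(\<Sum>k<(n::nat). f k * (if k = i then 1 else (0::'a::comm_ring_1))) = (if i < n then f i else 0)"
proof -
  have "(\<Sum>k<n. f k * (if k = i then 1 else (0::'a))) = (\<Sum>k<n. if k = i then f k else 0)"
    by (rule sum.cong) auto
  also have "\<dots> = (if i < n then f i else 0)" by (subst sum.delta; simp)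
  finally show ?thesis .
qed

lemma sum_split_add: "(\<Sum>i<(a::nat)+b. f i) = (\<Sum>i<a. f i) + (\<Sum>i<b. f (a + i))"
  by (induction b) (auto simp: add.assoc)

lemma gen_code_eq:
  fixes B :: "'a::comm_ring_1 mat"
  assumes "B \<in> carrier_mat n n"
  shows "gen_code (id_append n B) = cw n B ` carrier_vec n"
proof -
  have "(id_append n B)\<^sup>T *\<^sub>v u = cw n B u" if u: "u \<in> carrier_vec n" for u
  proof (rule eq_vecI)
    show "dim_vec ((id_append n B)\<^sup>T *\<^sub>v u) = dim_vec (cw n B u)"
      by (simp add: id_append_def cw_def)
    fix i assume "i < dim_vec (cw n B u)"
    hence i: "i < 2 * n" by (simp add: cw_def)
    show "((id_append n B)\<^sup>T *\<^sub>v u) $ i = cw n B u $ i"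
      using u i by (auto simp: id_append_def cw_def scalar_prod_def lessThan_atLeast0[symmetric]
          if_distrib[of "\<lambda>x. x * _"] mult.commute cong: if_cong)
  qed
  moreover have "dim_row (id_append n B) = n" by (simp add: id_append_def)
  ultimately show ?thesis unfolding gen_code_def by (auto intro!: image_eqI) (metis)
qed

lemma hweight_le: "hweight v \<le> dim_vec v"
proof -
  have "{i. i < dim_vec v \<and> v $ i \<noteq> 0} \<subseteq> {..<dim_vec v}" by auto
  hence "card {i. i < dim_vec v \<and> v $ i \<noteq> 0} \<le> card {..<dim_vec v}" by (intro card_mono) auto
  thus ?thesis by (simp add: hweight_def)
qed

lemma hweight_zero_iff:
  fixes v :: "'a::zero vec"
  assumes "v \<in> carrier_vec N" shows "v = 0\<^sub>v N \<longleftrightarrow> hweight v = 0"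
proof -
  have fin: "finite {i. i < dim_vec v \<and> v $ i \<noteq> 0}" by simp
  have "hweight v = 0 \<longleftrightarrow> (\<forall>i<N. v $ i = 0)" using assms fin
    unfolding hweight_def by (auto simp: card_eq_0_iff)
  moreover have "v = 0\<^sub>v N \<longleftrightarrow> (\<forall>i<N. v $ i = 0)" using assms by (auto intro!: eq_vecI)
  ultimately show ?thesis by simp
qed

lemma hweight_append:
  fixes x y :: "'a::zero vec"
  shows "hweight (x @\<^sub>v y) = hweight x + hweight y"
proof -
  let ?a = "dim_vec x" and ?b = "dim_vec y"
  have "{i. i < dim_vec (x @\<^sub>v y) \<and> (x @\<^sub>v y) $ i \<noteq> 0} =
     {i. i < ?a \<and> x $ i \<noteq> 0} \<union> (\<lambda>i. ?a + i) ` {i. i < ?b \<and> y $ i \<noteq> 0}"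
    (is "?L = ?R")
  proof
    show "?L \<subseteq> ?R"
    proof
      fix i assume "i \<in> ?L"
      thus "i \<in> ?R" by (cases "i < ?a") (auto simp: image_iff intro!: exI[of _ "i - ?a"])
    qed
    show "?R \<subseteq> ?L" by auto
  qed
  moreover have "card ?R = hweight x + hweight y"
    by (subst card_Un_disjoint) (auto simp: card_image hweight_def)
  ultimately show ?thesis by (simp add: hweight_def)
qed

lemma hweight_rev:
  fixes v w :: "'a::zero vec"
  assumes "v \<in> carrier_vec N" "w \<in> carrier_vec N"
    and "\<And>i. i < N \<Longrightarrow> (w $ i \<noteq> 0) = (v $ (N - 1 - i) \<noteq> 0)"
  shows "hweight w = hweight v"
proof -
  have "{i. i < dim_vec w \<and> w $ i \<noteq> 0} = (\<lambda>i. N - 1 - i) ` {i. i < dim_vec v \<and> v $ i \<noteq> 0}"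
    (is "?L = ?R")
  proof
    show "?L \<subseteq> ?R"
    proof
      fix i assume "i \<in> ?L"
      thus "i \<in> ?R" using assms by (auto simp: image_iff intro!: exI[of _ "N - Suc i"])
    qed
    show "?R \<subseteq> ?L" using assms by auto
  qed
  moreover have "inj_on (\<lambda>i. N - 1 - i) {i. i < dim_vec v \<and> v $ i \<noteq> 0}"
    using assms by (auto simp: inj_on_def)
  ultimately show ?thesis by (simp add: hweight_def card_image)
qed

definition wequiv :: "'a::zero vec set \<Rightarrow> 'a vec set \<Rightarrow> bool" where
  "wequiv X Y \<longleftrightarrow> (\<exists>\<phi>. bij_betw \<phi> X Y \<and> (\<forall>x\<in>X. hweight (\<phi> x) = hweight x))"

lemma wequiv_wd: assumes "wequiv X Y" shows "weight_distribution X w = weight_distribution Y w"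
proof -
  obtain \<phi> where b: "bij_betw \<phi> X Y" and h: "\<forall>x\<in>X. hweight (\<phi> x) = hweight x"
    using assms wequiv_def by blast
  have "\<phi> ` {c \<in> X. hweight c = w} = {c \<in> Y. hweight c = w}"
  proof (intro equalityI subsetI)
    fix y assume "y \<in> \<phi> ` {c \<in> X. hweight c = w}"
    then obtain x where "x \<in> X" "hweight x = w" "y = \<phi> x" by blast
    thus "y \<in> {c \<in> Y. hweight c = w}" using h bij_betwE[OF b] by auto
  next
    fix y assume y: "y \<in> {c \<in> Y. hweight c = w}"
    then obtain x where "x \<in> X" "y = \<phi> x" using b unfolding bij_betw_def by blast
    thus "y \<in> \<phi> ` {c \<in> X. hweight c = w}" using h y by auto
  qed
  have sub: "{c \<in> X. hweight c = w} \<subseteq> X" by blast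
  have "inj_on \<phi> {c \<in> X. hweight c = w}" by (rule inj_on_subset[OF bij_betw_imp_inj_on[OF b] sub])
  from card_image[OF this] show ?thesis unfolding weight_distribution_def \<open>\<phi> ` _ = _\<close> by simp
qed

lemma cw_carrier[simp]: "cw n M u \<in> carrier_vec (2*n)" by (simp add: cw_def)
lemma dcw_carrier[simp]: "dcw n M u \<in> carrier_vec (2*n)" by (simp add: dcw_def)

lemma dual_eq:
  fixes M :: "'a::comm_ring_1 mat"
  shows "euclid_dual (2*n) (cw n M ` carrier_vec n) = dcw n M ` carrier_vec n"
proof
  show "dcw n M ` carrier_vec n \<subseteq> euclid_dual (2*n) (cw n M ` carrier_vec n)"
  proof
    fix y assume "y \<in> dcw n M ` carrier_vec n"
    then obtain b where b: "b \<in> carrier_vec n" and y: "y = dcw n M b" by auto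
    have "(\<Sum>i<2*n. cw n M u $ i * y $ i) = 0" if u: "u \<in> carrier_vec n" for u
    proof -
      have "(\<Sum>i<2*n. cw n M u $ i * y $ i) = (\<Sum>i<n+n. cw n M u $ i * y $ i)" by (simp add: mult_2)
      also have "\<dots> = (\<Sum>i<n. u $ i * - (\<Sum>j<n. M $$ (i, j) * b $ j))
          + (\<Sum>i<n. (\<Sum>k<n. u $ k * M $$ (k, i)) * b $ i)"
        unfolding sum_split_add y by (simp add: cw_def dcw_def)
      also have "(\<Sum>i<n. (\<Sum>k<n. u $ k * M $$ (k, i)) * b $ i) = (\<Sum>i<n. \<Sum>k<n. u $ k * M $$ (k, i) * b $ i)"
        by (simp add: sum_distrib_right)
      also have "\<dots> = (\<Sum>k<n. \<Sum>i<n. u $ k * M $$ (k, i) * b $ i)" by (rule sum.swap)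
      also have "\<dots> = (\<Sum>k<n. u $ k * (\<Sum>i<n. M $$ (k, i) * b $ i))"
        by (simp add: sum_distrib_left mult.assoc)
      finally show ?thesis by (simp add: sum_negf)
    qed
    thus "y \<in> euclid_dual (2*n) (cw n M ` carrier_vec n)" unfolding euclid_dual_def y by auto
  qed
  show "euclid_dual (2*n) (cw n M ` carrier_vec n) \<subseteq> dcw n M ` carrier_vec n"
  proof
    fix y assume "y \<in> euclid_dual (2*n) (cw n M ` carrier_vec n)"
    hence y: "y \<in> carrier_vec (2*n)" and o: "\<And>u. u \<in> carrier_vec n \<Longrightarrow> (\<Sum>i<2*n. cw n M u $ i * y $ i) = 0"
      unfolding euclid_dual_def by auto
    define b where "b = vec n (\<lambda>i. y $ (n + i))"
    have "y = dcw n M b"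
    proof (rule eq_vecI)
      show "dim_vec y = dim_vec (dcw n M b)" using y by (simp add: dcw_def)
      fix i assume "i < dim_vec (dcw n M b)"
      hence i: "i < 2 * n" by (simp add: dcw_def)
      show "y $ i = dcw n M b $ i"
      proof (cases "i < n")
        case True
        have "0 = (\<Sum>i'<n+n. cw n M (unit_vec n i) $ i' * y $ i')"
          using o[of "unit_vec n i"] by (simp add: mult_2)
        also have "\<dots> = y $ i + (\<Sum>j<n. M $$ (i, j) * b $ j)"
          unfolding sum_split_add using True by (simp add: cw_def b_def mult.commute)
        finally show ?thesis using True by (simp add: dcw_def eq_neg_iff_add_eq_0)
      next
        case False
        have "dcw n M b $ i = b $ (i - n)" using i False by (simp add: dcw_def)
        also have "\<dots> = y $ (n + (i - n))" using i False unfolding b_def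
          by (subst index_vec) auto
        also have "\<dots> = y $ i" using False by (simp add: le_add_diff_inverse)
        finally show ?thesis by simp
      qed
    qed
    moreover have "b \<in> carrier_vec n" by (simp add: b_def)
    ultimately show "y \<in> dcw n M ` carrier_vec n" by auto
  qed
qed

definition rv :: "nat \<Rightarrow> 'a vec \<Rightarrow> 'a vec" where
  "rv n u = vec n (\<lambda>i. u $ (n - 1 - i))"

lemma rv_carrier[simp]: "rv n u \<in> carrier_vec n" by (simp add: rv_def)

lemma rv_rv: "u \<in> carrier_vec n \<Longrightarrow> rv n (rv n u) = u"
  by (intro eq_vecI) (auto simp: rv_def)

lemma sum_rev_lt: "(\<Sum>j<n. f (n - 1 - j)) = (\<Sum>j<(n::nat). f j)"
  using sum.nat_diff_reindex[of f n] by simp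

lemma single_wequiv:
  fixes M :: "'a::comm_ring_1 mat"
  assumes ps: "persym n M"
  shows "wequiv (cw n M ` carrier_vec n) (euclid_dual (2*n) (cw n M ` carrier_vec n))"
proof -
  define \<phi> where "\<phi> x = dcw n M (rv n (vec n (\<lambda>i. x $ i)))" for x
  have fst: "vec n (\<lambda>i. cw n M u $ i) = u" if "u \<in> carrier_vec n" for u
    using that by (intro eq_vecI) (auto simp: cw_def)
  have phi: "\<phi> (cw n M u) = dcw n M (rv n u)" if "u \<in> carrier_vec n" for u
    using fst[OF that] by (simp add: \<phi>_def)
  have dsnd: "dcw n M b $ (n + i) = b $ i" if "i < n" for b i
    using that by (simp add: dcw_def)
  have inj: "inj_on \<phi> (cw n M ` carrier_vec n)"
  proof (rule inj_onI)
    fix x y assume "x \<in> cw n M ` carrier_vec n" "y \<in> cw n M ` carrier_vec n" and e: "\<phi> x = \<phi> y"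
    then obtain u v where u: "u \<in> carrier_vec n" "x = cw n M u" and v: "v \<in> carrier_vec n" "y = cw n M v"
      by auto
    have "rv n u = rv n v"
    proof (rule eq_vecI)
      fix i assume "i < dim_vec (rv n v)"
      hence i: "i < n" by (simp add: rv_def)
      have "dcw n M (rv n u) $ (n + i) = dcw n M (rv n v) $ (n + i)" using e u v phi by simp
      thus "rv n u $ i = rv n v $ i" using dsnd[OF i] by simp
    qed (simp add: rv_def)
    hence "u = v" using rv_rv u v by metis
    thus "x = y" using u v by simp
  qed
  have img: "\<phi> ` (cw n M ` carrier_vec n) = dcw n M ` carrier_vec n"
  proof (intro equalityI subsetI)
    fix z assume "z \<in> \<phi> ` (cw n M ` carrier_vec n)"
    then obtain u where "u \<in> carrier_vec n" "z = \<phi> (cw n M u)" by auto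
    thus "z \<in> dcw n M ` carrier_vec n" using phi by auto
  next
    fix z assume "z \<in> dcw n M ` carrier_vec n"
    then obtain b where b: "b \<in> carrier_vec n" "z = dcw n M b" by auto
    hence "z = \<phi> (cw n M (rv n b))" using phi[of "rv n b"] rv_rv[OF b(1)] by simp
    thus "z \<in> \<phi> ` (cw n M ` carrier_vec n)" by auto
  qed
  have wt: "hweight (\<phi> x) = hweight x" if xX: "x \<in> cw n M ` carrier_vec n" for x
  proof -
    obtain u where u: "u \<in> carrier_vec n" "x = cw n M u" using xX by auto
    have "hweight (dcw n M (rv n u)) = hweight (cw n M u)"
    proof (rule hweight_rev[of _ "2*n"])
      fix i assume i: "i < 2 * n"
      show "(dcw n M (rv n u) $ i \<noteq> 0) = (cw n M u $ (2 * n - 1 - i) \<noteq> 0)"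
      proof (cases "i < n")
        case True
        have "(\<Sum>j<n. M $$ (i, j) * rv n u $ j) = (\<Sum>j<n. M $$ (i, j) * u $ (n - 1 - j))"
          by (rule sum.cong) (auto simp: rv_def)
        also have "\<dots> = (\<Sum>j<n. M $$ (i, n - 1 - j) * u $ (n - 1 - (n - 1 - j)))"
          by (rule sum_rev_lt[of "\<lambda>j. M $$ (i, j) * u $ (n - 1 - j)", symmetric])
        also have "\<dots> = (\<Sum>j<n. M $$ (i, n - 1 - j) * u $ j)"
          by (rule sum.cong) auto
        also have "\<dots> = (\<Sum>k<n. u $ k * M $$ (k, n - 1 - i))"
        proof (rule sum.cong)
          fix j assume "j \<in> {..<n}"
          hence j: "j < n" by simp
          have "n - 1 - j < n" using j by simp
          hence "M $$ (i, n - 1 - j) = M $$ (n - 1 - (n - 1 - j), n - 1 - i)"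
            using ps True unfolding persym_def by blast
          also have "n - 1 - (n - 1 - j) = j" using j by simp
          finally show "M $$ (i, n - 1 - j) * u $ j = u $ j * M $$ (j, n - 1 - i)"
            by (simp add: mult.commute)
        qed simp
        finally have "dcw n M (rv n u) $ i = - (cw n M u $ (2 * n - 1 - i))"
          using True by (simp add: dcw_def cw_def)
        thus ?thesis by simp
      next
        case False
        have e1: "n + n - Suc i = 2 * n - Suc i" "n - Suc (i - n) = 2 * n - Suc i" using False i by auto
        have e2: "2 * n - Suc i < n" using False i by simp
        show ?thesis using i False e2 by (simp add: dcw_def cw_def rv_def e1) (metis e1(2))
      qed
    qed auto
    thus ?thesis using u phi by simp
  qed
  show ?thesis unfolding wequiv_def dual_eq
    using inj img wt by (intro exI[of _ \<phi>]) (auto simp: bij_betw_def)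
qed

lemma persymD: "persym n M \<Longrightarrow> i < n \<Longrightarrow> j < n \<Longrightarrow> M $$ (i, j) = M $$ (n - 1 - j, n - 1 - i)"
  unfolding persym_def by blast

lemma toeplitz_persym: assumes "is_toeplitz A n" shows "persym n A"
  unfolding persym_def
proof (intro allI impI)
  fix i j assume i: "i < n" and j: "j < n"
  have T: "\<And>i j i' j'. i < n \<Longrightarrow> j < n \<Longrightarrow> i' < n \<Longrightarrow> j' < n \<Longrightarrow>
        int j - int i = int j' - int i' \<Longrightarrow> A $$ (i, j) = A $$ (i', j')"
    using assms unfolding is_toeplitz_def by blast
  have "int (n - 1 - i) - int (n - 1 - j) = int j - int i" using i j by linarith
  moreover have "n - 1 - j < n" "n - 1 - i < n" using i j by auto
  ultimately show "A $$ (i, j) = A $$ (n - 1 - j, n - 1 - i)" using T[OF i j] by metis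
qed

lemma mult_entry: "A \<in> carrier_mat n n \<Longrightarrow> B \<in> carrier_mat n n \<Longrightarrow> i < n \<Longrightarrow> j < n \<Longrightarrow>
  (A * B) $$ (i, j) = (\<Sum>l<n. A $$ (i, l) * B $$ (l, j))"
  by (simp add: scalar_prod_def lessThan_atLeast0 mult.commute)

lemma pow_comm: "A \<in> carrier_mat n n \<Longrightarrow> A ^\<^sub>m k * A = A * A ^\<^sub>m k"
proof (induction k)
  case 0 thus ?case by simp
next
  case (Suc k)
  have "A ^\<^sub>m Suc k * A = (A * A ^\<^sub>m k) * A" using Suc by simp
  also have "\<dots> = A * (A ^\<^sub>m k * A)" using Suc.prems by (intro assoc_mult_mat) auto
  finally show ?case by simp
qed

lemma pow_persym:
  fixes A :: "'a::comm_ring_1 mat"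
  assumes A: "A \<in> carrier_mat n n" and ps: "persym n A"
  shows "persym n (A ^\<^sub>m k)"
proof (induction k)
  case 0 thus ?case using A by (auto simp: persym_def)
next
  case (Suc k)
  let ?P = "A ^\<^sub>m k"
  have P: "?P \<in> carrier_mat n n" using A by simp
  show ?case unfolding persym_def
  proof (intro allI impI)
    fix i j assume i: "i < n" and j: "j < n"
    have "(A ^\<^sub>m Suc k) $$ (i, j) = (\<Sum>l<n. ?P $$ (i, l) * A $$ (l, j))"
      using mult_entry[OF P A i j] by simp
    also have "\<dots> = (\<Sum>l<n. A $$ (n - 1 - j, n - 1 - l) * ?P $$ (n - 1 - l, n - 1 - i))"
    proof (rule sum.cong)
      fix l assume "l \<in> {..<n}" hence l: "l < n" by simp
      show "?P $$ (i, l) * A $$ (l, j) = A $$ (n - 1 - j, n - 1 - l) * ?P $$ (n - 1 - l, n - 1 - i)"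
        using persymD[OF Suc.IH i l] persymD[OF ps l j] by (simp add: mult.commute)
    qed simp
    also have "\<dots> = (\<Sum>l<n. A $$ (n - 1 - j, l) * ?P $$ (l, n - 1 - i))"
      by (rule sum_rev_lt[of "\<lambda>l. A $$ (n - 1 - j, l) * ?P $$ (l, n - 1 - i)"])
    also have "\<dots> = (A * ?P) $$ (n - 1 - j, n - 1 - i)"
      using mult_entry[OF A P, of "n - 1 - j" "n - 1 - i"] i j by simp
    also have "A * ?P = A ^\<^sub>m Suc k" using pow_comm[OF A, of k] by simp
    finally show "(A ^\<^sub>m Suc k) $$ (i, j) = (A ^\<^sub>m Suc k) $$ (n - 1 - j, n - 1 - i)" .
  qed
qed

lemma poly_mat_carrier: "A \<in> carrier_mat n n \<Longrightarrow> poly_mat f A \<in> carrier_mat n n"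
  by (simp add: poly_mat_def)

lemma poly_mat_persym:
  fixes A :: "'a::comm_ring_1 mat"
  assumes A: "A \<in> carrier_mat n n" and ps: "persym n A"
  shows "persym n (poly_mat f A)"
  unfolding persym_def
proof (intro allI impI)
  fix i j assume i: "i < n" and j: "j < n"
  have "poly_mat f A $$ (i, j) = (\<Sum>k\<le>degree f. coeff f k * (A ^\<^sub>m k) $$ (i, j))"
    using A i j by (simp add: poly_mat_def)
  also have "\<dots> = (\<Sum>k\<le>degree f. coeff f k * (A ^\<^sub>m k) $$ (n - 1 - j, n - 1 - i))"
    using persymD[OF pow_persym[OF A ps] i j] by simp
  also have "\<dots> = poly_mat f A $$ (n - 1 - j, n - 1 - i)"
    using A i j by (simp add: poly_mat_def)
  finally show "poly_mat f A $$ (i, j) = poly_mat f A $$ (n - 1 - j, n - 1 - i)" .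
qed

definition prodc :: "'a vec set \<Rightarrow> 'a vec set \<Rightarrow> 'a vec set" where
  "prodc X Y = {x @\<^sub>v y | x y. x \<in> X \<and> y \<in> Y}"

lemma take_app: "x \<in> carrier_vec a \<Longrightarrow> y \<in> carrier_vec b \<Longrightarrow> vec a (\<lambda>i. (x @\<^sub>v y) $ i) = x"
  by (intro eq_vecI) auto

lemma drop_app: "x \<in> carrier_vec a \<Longrightarrow> y \<in> carrier_vec b \<Longrightarrow> vec b (\<lambda>i. (x @\<^sub>v y) $ (a + i)) = y"
  by (intro eq_vecI) auto

lemma split_vec: "z \<in> carrier_vec (a + b) \<Longrightarrow> z = vec a (\<lambda>i. z $ i) @\<^sub>v vec b (\<lambda>i. z $ (a + i))"
  by (intro eq_vecI) auto

lemma sum_append: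
  fixes x y z :: "'a::comm_ring_1 vec"
  assumes "x \<in> carrier_vec a" "y \<in> carrier_vec b"
  shows "(\<Sum>i<a+b. (x @\<^sub>v y) $ i * z $ i) = (\<Sum>i<a. x $ i * z $ i) + (\<Sum>i<b. y $ i * z $ (a + i))"
  unfolding sum_split_add using assms by simp

lemma dual_prod:
  fixes X Y :: "'a::comm_ring_1 vec set"
  assumes X: "X \<subseteq> carrier_vec a" and Y: "Y \<subseteq> carrier_vec b" and X0: "0\<^sub>v a \<in> X" and Y0: "0\<^sub>v b \<in> Y"
  shows "euclid_dual (a + b) (prodc X Y) = prodc (euclid_dual a X) (euclid_dual b Y)"
proof (intro equalityI subsetI)
  fix z assume "z \<in> euclid_dual (a + b) (prodc X Y)"
  hence z: "z \<in> carrier_vec (a + b)" and o: "\<And>c. c \<in> prodc X Y \<Longrightarrow> (\<Sum>i<a+b. c $ i * z $ i) = 0"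
    unfolding euclid_dual_def by auto
  define s where "s = vec a (\<lambda>i. z $ i)"
  define t where "t = vec b (\<lambda>i. z $ (a + i))"
  have zst: "z = s @\<^sub>v t" using split_vec[OF z] by (simp add: s_def t_def)
  have "s \<in> euclid_dual a X" unfolding euclid_dual_def
  proof (intro CollectI conjI ballI)
    fix x assume x: "x \<in> X"
    have "x @\<^sub>v 0\<^sub>v b \<in> prodc X Y" using x Y0 unfolding prodc_def by blast
    from o[OF this] show "(\<Sum>i<a. x $ i * s $ i) = 0"
      using X x by (simp add: sum_append[of x a "0\<^sub>v b" b] s_def subset_iff)
  qed (simp add: s_def)
  moreover have "t \<in> euclid_dual b Y" unfolding euclid_dual_def
  proof (intro CollectI conjI ballI)
    fix y assume y: "y \<in> Y"
    have "0\<^sub>v a @\<^sub>v y \<in> prodc X Y" using y X0 unfolding prodc_def by blast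
    from o[OF this] show "(\<Sum>i<b. y $ i * t $ i) = 0"
      using Y y by (simp add: sum_append[of "0\<^sub>v a" a y b] t_def subset_iff)
  qed (simp add: t_def)
  ultimately show "z \<in> prodc (euclid_dual a X) (euclid_dual b Y)" unfolding prodc_def zst by blast
next
  fix z assume "z \<in> prodc (euclid_dual a X) (euclid_dual b Y)"
  then obtain s t where s: "s \<in> euclid_dual a X" and t: "t \<in> euclid_dual b Y" and z: "z = s @\<^sub>v t"
    unfolding prodc_def by blast
  have sc: "s \<in> carrier_vec a" and tc: "t \<in> carrier_vec b" using s t unfolding euclid_dual_def by auto
  have "(\<Sum>i<a+b. c $ i * z $ i) = 0" if c: "c \<in> prodc X Y" for c
  proof -
    obtain x y where x: "x \<in> X" and y: "y \<in> Y" and cxy: "c = x @\<^sub>v y" using c unfolding prodc_def by blast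
    have xc: "x \<in> carrier_vec a" and yc: "y \<in> carrier_vec b" using x y X Y by auto
    have "(\<Sum>i<a+b. c $ i * z $ i) = (\<Sum>i<a. x $ i * z $ i) + (\<Sum>i<b. y $ i * z $ (a + i))"
      unfolding cxy by (rule sum_append[OF xc yc])
    also have "(\<Sum>i<a. x $ i * z $ i) = (\<Sum>i<a. x $ i * s $ i)"
      using sc tc unfolding z by (intro sum.cong) auto
    also have "(\<Sum>i<b. y $ i * z $ (a + i)) = (\<Sum>i<b. y $ i * t $ i)"
      using sc tc unfolding z by (intro sum.cong) auto
    finally show ?thesis using s t x y unfolding euclid_dual_def by simp
  qed
  moreover have "z \<in> carrier_vec (a + b)" using sc tc z by simp
  ultimately show "z \<in> euclid_dual (a + b) (prodc X Y)" unfolding euclid_dual_def by blast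
qed

lemma wequiv_prod:
  fixes X Y X' Y' :: "'a::zero vec set"
  assumes X: "X \<subseteq> carrier_vec a" and Y: "Y \<subseteq> carrier_vec b"
    and X': "X' \<subseteq> carrier_vec a" and Y': "Y' \<subseteq> carrier_vec b"
    and e1: "wequiv X X'" and e2: "wequiv Y Y'"
  shows "wequiv (prodc X Y) (prodc X' Y')"
proof -
  obtain f where f: "bij_betw f X X'" and fw: "\<forall>x\<in>X. hweight (f x) = hweight x"
    using e1 unfolding wequiv_def by blast
  obtain g where g: "bij_betw g Y Y'" and gw: "\<forall>x\<in>Y. hweight (g x) = hweight x"
    using e2 unfolding wequiv_def by blast
  define \<Phi> where "\<Phi> z = f (vec a (\<lambda>i. z $ i)) @\<^sub>v g (vec b (\<lambda>i. z $ (a + i)))" for z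
  have Phi: "\<Phi> (x @\<^sub>v y) = f x @\<^sub>v g y" if "x \<in> X" "y \<in> Y" for x y
    using that X Y take_app drop_app unfolding \<Phi>_def by (metis subsetD)
  have fX: "f x \<in> X'" if "x \<in> X" for x using f that unfolding bij_betw_def by blast
  have gY: "g y \<in> Y'" if "y \<in> Y" for y using g that unfolding bij_betw_def by blast
  have inj: "inj_on \<Phi> (prodc X Y)"
  proof (rule inj_onI)
    fix c d assume "c \<in> prodc X Y" "d \<in> prodc X Y" and e: "\<Phi> c = \<Phi> d"
    then obtain x y x1 y1 where x: "x \<in> X" and y: "y \<in> Y" and c: "c = x @\<^sub>v y"
      and x1: "x1 \<in> X" and y1: "y1 \<in> Y" and d: "d = x1 @\<^sub>v y1" unfolding prodc_def by blast
    have "f x @\<^sub>v g y = f x1 @\<^sub>v g y1" using e Phi x y x1 y1 c d by simp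
    hence "f x = f x1" "g y = g y1" using fX[OF x] fX[OF x1] X' append_vec_eq by (metis subsetD)+
    hence "x = x1" "y = y1" using f g x y x1 y1 unfolding bij_betw_def by (metis inj_onD)+
    thus "c = d" using c d by simp
  qed
  have img: "\<Phi> ` prodc X Y = prodc X' Y'"
  proof (intro equalityI subsetI)
    fix z assume "z \<in> \<Phi> ` prodc X Y"
    then obtain x y where "x \<in> X" "y \<in> Y" "z = \<Phi> (x @\<^sub>v y)" unfolding prodc_def by blast
    thus "z \<in> prodc X' Y'" using Phi fX gY unfolding prodc_def by blast
  next
    fix z assume "z \<in> prodc X' Y'"
    then obtain x' y' where x': "x' \<in> X'" and y': "y' \<in> Y'" and z: "z = x' @\<^sub>v y'" unfolding prodc_def by blast
    obtain x where x: "x \<in> X" "x' = f x" using f x' unfolding bij_betw_def by blast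
    obtain y where y: "y \<in> Y" "y' = g y" using g y' unfolding bij_betw_def by blast
    have "z = \<Phi> (x @\<^sub>v y)" using Phi x y z by simp
    moreover have "x @\<^sub>v y \<in> prodc X Y" using x y unfolding prodc_def by blast
    ultimately show "z \<in> \<Phi> ` prodc X Y" by blast
  qed
  have wt: "hweight (\<Phi> c) = hweight c" if cP: "c \<in> prodc X Y" for c
  proof -
    obtain x y where x: "x \<in> X" and y: "y \<in> Y" and c: "c = x @\<^sub>v y" using cP unfolding prodc_def by blast
    show ?thesis using Phi[OF x y] fw gw x y c by (simp add: hweight_append)
  qed
  show ?thesis unfolding wequiv_def using inj img wt by (intro exI[of _ \<Phi>]) (simp add: bij_betw_def)
qed

lemma herm_wequiv:
  fixes C :: "'a::field vec set"
  assumes r: "r > 0" and inv: "\<And>x::'a. (x ^ r) ^ r = x"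
  shows "wequiv (euclid_dual N C) (herm_dual r N C)"
proof -
  define F where "F y = map_vec (\<lambda>x. x ^ r) y" for y :: "'a vec"
  have FF: "F (F y) = y" for y
  proof (rule eq_vecI)
    show "dim_vec (F (F y)) = dim_vec y" by (simp add: F_def)
    fix i assume "i < dim_vec y"
    thus "F (F y) $ i = y $ i" unfolding F_def using inv[of "y $ i"] by simp
  qed
  have Fc: "F y \<in> carrier_vec N \<longleftrightarrow> y \<in> carrier_vec N" for y unfolding F_def by (rule map_carrier_vec)
  have FE: "F y \<in> herm_dual r N C" if yE: "y \<in> euclid_dual N C" for y
  proof -
    have yc: "y \<in> carrier_vec N" and o: "\<forall>x\<in>C. (\<Sum>i<N. x $ i * y $ i) = 0"
      using yE unfolding euclid_dual_def by auto
    have "(\<Sum>i<N. x $ i * (F y $ i) ^ r) = (\<Sum>i<N. x $ i * y $ i)" for x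
      using yc by (intro sum.cong) (auto simp: F_def inv)
    thus ?thesis using o yc Fc unfolding herm_dual_def by simp
  qed
  have FH: "F y \<in> euclid_dual N C" if yH: "y \<in> herm_dual r N C" for y
  proof -
    have yc: "y \<in> carrier_vec N" and o: "\<forall>x\<in>C. (\<Sum>i<N. x $ i * y $ i ^ r) = 0"
      using yH unfolding herm_dual_def by auto
    have "(\<Sum>i<N. x $ i * F y $ i) = (\<Sum>i<N. x $ i * y $ i ^ r)" for x
      using yc by (intro sum.cong) (auto simp: F_def)
    thus ?thesis using o yc Fc unfolding euclid_dual_def by simp
  qed
  have "bij_betw F (euclid_dual N C) (herm_dual r N C)"
  proof (rule bij_betw_imageI)
    show "inj_on F (euclid_dual N C)" by (metis FF inj_onI)
    show "F ` euclid_dual N C = herm_dual r N C"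
    proof (intro equalityI subsetI)
      fix z assume "z \<in> F ` euclid_dual N C" thus "z \<in> herm_dual r N C" using FE by blast
    next
      fix z assume "z \<in> herm_dual r N C" thus "z \<in> F ` euclid_dual N C" using FH[of z] FF[of z] by (intro image_eqI[of _ F "F z"]) simp_all
    qed
  qed
  moreover have "hweight (F y) = hweight y" for y
  proof -
    have "{i. i < dim_vec (F y) \<and> F y $ i \<noteq> 0} = {i. i < dim_vec y \<and> y $ i \<noteq> 0}"
      using r by (auto simp: F_def)
    thus ?thesis unfolding hweight_def by simp
  qed
  ultimately show ?thesis unfolding wequiv_def by blast
qed

lemma fermat_field:
  fixes x :: "'a::{finite,field}"
  shows "x ^ card (UNIV::'a set) = x"
proof (cases "x = 0")
  case True thus ?thesis by (simp add: zero_power finite_UNIV_card_ge_0)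
next
  case False
  let ?S = "UNIV - {0::'a}"
  have inj: "inj_on ((*) x) ?S" using False by (auto simp: inj_on_def)
  have im: "(*) x ` ?S = ?S"
  proof (intro equalityI subsetI)
    fix z assume "z \<in> (*) x ` ?S" thus "z \<in> ?S" using False by auto
  next
    fix z assume z: "z \<in> ?S"
    have "z = x * (z / x)" using False by simp
    moreover have "z / x \<in> ?S" using z False by simp
    ultimately show "z \<in> (*) x ` ?S" by blast
  qed
  have "(\<Prod>y\<in>?S. y) = (\<Prod>y\<in>(*) x ` ?S. y)" using im by simp
  also have "\<dots> = (\<Prod>y\<in>?S. x * y)" using prod.reindex[OF inj, of "\<lambda>y. y"] by simp
  finally have "(\<Prod>y\<in>?S. x * y) = (\<Prod>y\<in>?S. y)" by simp
  moreover have "(\<Prod>y\<in>?S. x * y) = x ^ card ?S * (\<Prod>y\<in>?S. y)" by (simp add: prod.distrib)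
  moreover have "(\<Prod>y\<in>?S. y) \<noteq> 0" by simp
  ultimately have "x ^ card ?S = 1" by simp
  moreover have "card ?S = card (UNIV::'a set) - 1" by (simp add: card_Diff_singleton)
  ultimately have xm: "x ^ (card (UNIV::'a set) - 1) = 1" by simp
  have "card (UNIV::'a set) > 0" by (simp add: finite_UNIV_card_ge_0)
  then obtain m where m: "card (UNIV::'a set) = Suc m" using gr0_implies_Suc by blast
  show ?thesis using xm unfolding m by simp
qed

lemma nz_iff: "(c \<noteq> 0\<^sub>v (dim_vec c)) = (hweight c \<noteq> 0)"
  using hweight_zero_iff[OF carrier_vecI[OF refl], of c] by simp

lemma min_dist_alt: "min_dist X = Min {hweight c | c. c \<in> X \<and> hweight c \<noteq> 0}"
  unfolding min_dist_def nz_iff ..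

lemma wset_finite:
  assumes "X \<subseteq> carrier_vec a" shows "finite {hweight c | c. c \<in> X \<and> hweight c \<noteq> 0}"
proof (rule finite_subset)
  show "{hweight c | c. c \<in> X \<and> hweight c \<noteq> 0} \<subseteq> {..a}"
  proof
    fix w assume "w \<in> {hweight c | c. c \<in> X \<and> hweight c \<noteq> 0}"
    then obtain c where c: "c \<in> X" "w = hweight c" by blast
    have "hweight c \<le> dim_vec c" by (rule hweight_le)
    also have "dim_vec c = a" using c assms by auto
    finally show "w \<in> {..a}" using c by simp
  qed
qed simp

lemma hweight_0v[simp]: "hweight (0\<^sub>v n) = 0"
  using hweight_zero_iff[of "0\<^sub>v n" n] by simp

lemma min_dist_prod:
  fixes X Y :: "'a::zero vec set"
  assumes X: "X \<subseteq> carrier_vec a" and Y: "Y \<subseteq> carrier_vec b" and X0: "0\<^sub>v a \<in> X" and Y0: "0\<^sub>v b \<in> Y"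
    and nX: "\<exists>x\<in>X. hweight x \<noteq> 0" and nY: "\<exists>y\<in>Y. hweight y \<noteq> 0"
  shows "min_dist (prodc X Y) = min (min_dist X) (min_dist Y)"
proof -
  define WX where "WX = {hweight c | c. c \<in> X \<and> hweight c \<noteq> 0}"
  define WY where "WY = {hweight c | c. c \<in> Y \<and> hweight c \<noteq> 0}"
  define WP where "WP = {hweight c | c. c \<in> prodc X Y \<and> hweight c \<noteq> 0}"
  have P: "prodc X Y \<subseteq> carrier_vec (a + b)" using X Y unfolding prodc_def by auto
  have fX: "finite WX" unfolding WX_def by (rule wset_finite[OF X])
  have fY: "finite WY" unfolding WY_def by (rule wset_finite[OF Y])
  have fP: "finite WP" unfolding WP_def by (rule wset_finite[OF P])
  have neX: "WX \<noteq> {}" using nX unfolding WX_def by blast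
  have neY: "WY \<noteq> {}" using nY unfolding WY_def by blast
  have XP: "WX \<subseteq> WP"
  proof
    fix w assume "w \<in> WX"
    then obtain x where x: "x \<in> X" "hweight x \<noteq> 0" "w = hweight x" unfolding WX_def by blast
    have "x @\<^sub>v 0\<^sub>v b \<in> prodc X Y" using x Y0 unfolding prodc_def by blast
    moreover have "hweight (x @\<^sub>v 0\<^sub>v b) = w" using x by (simp add: hweight_append)
    ultimately have "w = hweight (x @\<^sub>v 0\<^sub>v b) \<and> x @\<^sub>v 0\<^sub>v b \<in> prodc X Y \<and> hweight (x @\<^sub>v 0\<^sub>v b) \<noteq> 0" using x by simp
    thus "w \<in> WP" unfolding WP_def by blast
  qed
  have YP: "WY \<subseteq> WP"
  proof
    fix w assume "w \<in> WY"
    then obtain y where y: "y \<in> Y" "hweight y \<noteq> 0" "w = hweight y" unfolding WY_def by blast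
    have "0\<^sub>v a @\<^sub>v y \<in> prodc X Y" using y X0 unfolding prodc_def by blast
    moreover have "hweight (0\<^sub>v a @\<^sub>v y) = w" using y by (simp add: hweight_append)
    ultimately have "w = hweight (0\<^sub>v a @\<^sub>v y) \<and> 0\<^sub>v a @\<^sub>v y \<in> prodc X Y \<and> hweight (0\<^sub>v a @\<^sub>v y) \<noteq> 0" using y by simp
    thus "w \<in> WP" unfolding WP_def by blast
  qed
  have neP: "WP \<noteq> {}" using neX XP by blast
  have le1: "Min WP \<le> Min WX" by (rule Min_le[OF fP]) (use XP Min_in[OF fX neX] in blast)
  have le2: "Min WP \<le> Min WY" by (rule Min_le[OF fP]) (use YP Min_in[OF fY neY] in blast)
  have "Min WP \<in> WP" using fP neP by (rule Min_in)
  then obtain x y where x: "x \<in> X" and y: "y \<in> Y" and nz: "hweight (x @\<^sub>v y) \<noteq> 0"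
    and m: "Min WP = hweight (x @\<^sub>v y)" unfolding WP_def prodc_def by blast
  have "min (Min WX) (Min WY) \<le> Min WP"
  proof (cases "hweight x = 0")
    case True
    hence "hweight y \<noteq> 0" using nz by (simp add: hweight_append)
    hence "hweight y \<in> WY" using y unfolding WY_def by blast
    hence "Min WY \<le> hweight y" using fY by simp
    thus ?thesis using m by (simp add: hweight_append)
  next
    case False
    hence "hweight x \<in> WX" using x unfolding WX_def by blast
    hence "Min WX \<le> hweight x" using fX by simp
    thus ?thesis using m by (simp add: hweight_append)
  qed
  hence "Min WP = min (Min WX) (Min WY)" using le1 le2 by linarith
  thus ?thesis unfolding min_dist_alt WX_def WY_def WP_def .
qed

lemma cw_first: "i < n \<Longrightarrow> cw n M u $ i = u $ i" by (simp add: cw_def)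

lemma cw_add: "u \<in> carrier_vec n \<Longrightarrow> v \<in> carrier_vec n \<Longrightarrow> cw n M (u + v) = cw n M u + cw n M v"
  by (intro eq_vecI) (auto simp: cw_def sum.distrib distrib_right)

lemma cw_smult: "u \<in> carrier_vec n \<Longrightarrow> cw n M (a \<cdot>\<^sub>v u) = a \<cdot>\<^sub>v cw n M u"
  by (intro eq_vecI) (auto simp: cw_def sum_distrib_left mult.assoc)

lemma cw_zero: "cw n (M :: 'a::comm_ring_1 mat) (0\<^sub>v n) = 0\<^sub>v (2 * n)"
  by (intro eq_vecI) (auto simp: cw_def)

lemma smult_append: "a \<cdot>\<^sub>v (x @\<^sub>v y) = (a \<cdot>\<^sub>v x) @\<^sub>v (a \<cdot>\<^sub>v y)"
  by (intro eq_vecI) auto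

lemma code_facts:
  fixes A :: "'a::field mat"
  assumes "is_toeplitz A n"
  shows "gen_code (id_append n (poly_mat f A)) = cw n (poly_mat f A) ` carrier_vec n"
    and "persym n (poly_mat f A)"
proof -
  have A: "A \<in> carrier_mat n n" using assms unfolding is_toeplitz_def by blast
  show "gen_code (id_append n (poly_mat f A)) = cw n (poly_mat f A) ` carrier_vec n"
    by (rule gen_code_eq[OF poly_mat_carrier[OF A]])
  show "persym n (poly_mat f A)" by (rule poly_mat_persym[OF A toeplitz_persym[OF assms]])
qed


theorem theorem4:
  fixes A1 A2 :: "'a::{finite,field} mat" and f1 f2 :: "'a poly"
    and n d1 d2 :: nat and C1 C2 :: "'a vec set"
  assumes "n \<ge> 1"
    and "is_toeplitz A1 n" and "is_toeplitz A2 n"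
    and "C1 = gen_code (id_append n (poly_mat f1 A1))"
    and "C2 = gen_code (id_append n (poly_mat f2 A2))"
    and "linear_code (2 * n) n C1" and "min_dist C1 = d1"
    and "linear_code (2 * n) n C2" and "min_dist C2 = d2"
  shows "\<exists>C :: 'a vec set. linear_code (4 * n) (2 * n) C \<and> min_dist C = min d1 d2 \<and>
           fsd_euclid (4 * n) C \<and>
           (\<forall>p h. prime p \<longrightarrow> even h \<longrightarrow> h > 0 \<longrightarrow> card (UNIV :: 'a set) = p ^ h \<longrightarrow>
              fsd_herm (p ^ (h div 2)) (4 * n) C)"
proof -
  define M1 where "M1 = poly_mat f1 A1"
  define M2 where "M2 = poly_mat f2 A2"
  have C1: "C1 = cw n M1 ` carrier_vec n" and P1: "persym n M1"
    using code_facts[OF assms(2), of f1] assms(4) unfolding M1_def by auto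
  have C2: "C2 = cw n M2 ` carrier_vec n" and P2: "persym n M2"
    using code_facts[OF assms(3), of f2] assms(5) unfolding M2_def by auto
  define C where "C = prodc C1 C2"
  have C1c: "C1 \<subseteq> carrier_vec (2 * n)" and C2c: "C2 \<subseteq> carrier_vec (2 * n)" using C1 C2 by auto
  have C10: "0\<^sub>v (2 * n) \<in> C1" using C1 cw_zero[of n M1] by (metis zero_carrier_vec image_eqI)
  have C20: "0\<^sub>v (2 * n) \<in> C2" using C2 cw_zero[of n M2] by (metis zero_carrier_vec image_eqI)
  have n4: "4 * n = 2 * n + 2 * n" by simp
  define L where "L u = cw n M1 (vec n (\<lambda>i. u $ i)) @\<^sub>v cw n M2 (vec n (\<lambda>i. u $ (n + i)))" for u :: "'a vec"
  have Lc: "L u \<in> carrier_vec (2 * n + 2 * n)" for u unfolding L_def by (intro carrier_vecI) (simp add: cw_def)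
  have vadd: "vec n (\<lambda>i. (u + v) $ (k + i)) = vec n (\<lambda>i. u $ (k + i)) + vec n (\<lambda>i. v $ (k + i))"
    if "u \<in> carrier_vec (2 * n)" "v \<in> carrier_vec (2 * n)" "k \<le> n" for u v k
    using that by (intro eq_vecI) auto
  have vsm: "vec n (\<lambda>i. (a \<cdot>\<^sub>v u) $ (k + i)) = a \<cdot>\<^sub>v vec n (\<lambda>i. u $ (k + i))"
    if "u \<in> carrier_vec (2 * n)" "k \<le> n" for u a k
    using that by (intro eq_vecI) auto
  have Ladd: "L (u + v) = L u + L v" if uv: "u \<in> carrier_vec (2 * n)" "v \<in> carrier_vec (2 * n)" for u v
  proof -
    have a1: "vec n (\<lambda>i. (u + v) $ i) = vec n (\<lambda>i. u $ i) + vec n (\<lambda>i. v $ i)"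
      using uv by (intro eq_vecI) auto
    have a2: "vec n (\<lambda>i. (u + v) $ (n + i)) = vec n (\<lambda>i. u $ (n + i)) + vec n (\<lambda>i. v $ (n + i))"
      using uv by (intro eq_vecI) auto
    have "L (u + v) = (cw n M1 (vec n (\<lambda>i. u $ i)) + cw n M1 (vec n (\<lambda>i. v $ i)))
       @\<^sub>v (cw n M2 (vec n (\<lambda>i. u $ (n + i))) + cw n M2 (vec n (\<lambda>i. v $ (n + i))))"
      unfolding L_def a1 a2 by (simp add: cw_add)
    also have "\<dots> = L u + L v" unfolding L_def
      by (rule append_vec_add[symmetric, of _ "2 * n" _ _ "2 * n"]) auto
    finally show ?thesis .
  qed
  have Lsm: "L (a \<cdot>\<^sub>v u) = a \<cdot>\<^sub>v L u" if u: "u \<in> carrier_vec (2 * n)" for u a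
  proof -
    have a1: "vec n (\<lambda>i. (a \<cdot>\<^sub>v u) $ i) = a \<cdot>\<^sub>v vec n (\<lambda>i. u $ i)"
      using u by (intro eq_vecI) auto
    have a2: "vec n (\<lambda>i. (a \<cdot>\<^sub>v u) $ (n + i)) = a \<cdot>\<^sub>v vec n (\<lambda>i. u $ (n + i))"
      using u by (intro eq_vecI) auto
    show ?thesis unfolding L_def a1 a2 smult_append by (simp add: cw_smult)
  qed
  have Linj: "inj_on L (carrier_vec (2 * n))"
  proof (rule inj_onI)
    fix u v assume u: "u \<in> carrier_vec (2 * n)" and v: "v \<in> carrier_vec (2 * n)" and e: "L u = L v"
    have e1: "cw n M1 (vec n (\<lambda>i. u $ i)) = cw n M1 (vec n (\<lambda>i. v $ i))"
      and e2: "cw n M2 (vec n (\<lambda>i. u $ (n + i))) = cw n M2 (vec n (\<lambda>i. v $ (n + i)))"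
      using e unfolding L_def by (subst (asm) append_vec_eq[OF cw_carrier cw_carrier]; simp)+
    show "u = v"
    proof (rule eq_vecI)
      show "dim_vec u = dim_vec v" using u v by simp
      fix i assume "i < dim_vec v"
      hence i: "i < 2 * n" using v by simp
      show "u $ i = v $ i"
      proof (cases "i < n")
        case True
        have "cw n M1 (vec n (\<lambda>i. u $ i)) $ i = cw n M1 (vec n (\<lambda>i. v $ i)) $ i" using e1 by simp
        thus ?thesis using True by (simp add: cw_first)
      next
        case False
        have ii: "i - n < n" "n + (i - n) = i" using False i by auto
        have "cw n M2 (vec n (\<lambda>i. u $ (n + i))) $ (i - n) = cw n M2 (vec n (\<lambda>i. v $ (n + i))) $ (i - n)"
          using e2 by simp
        hence "u $ (n + (i - n)) = v $ (n + (i - n))" using ii(1) by (simp add: cw_first)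
        thus ?thesis using ii(2) by simp
      qed
    qed
  qed
  have LC: "L ` carrier_vec (2 * n) = C"
  proof (intro equalityI subsetI)
    fix z assume "z \<in> L ` carrier_vec (2 * n)"
    then obtain u where "z = L u" by blast
    moreover have "cw n M1 (vec n (\<lambda>i. u $ i)) \<in> C1" "cw n M2 (vec n (\<lambda>i. u $ (n + i))) \<in> C2"
      unfolding C1 C2 by (auto intro!: imageI)
    ultimately show "z \<in> C" unfolding C_def prodc_def L_def by blast
  next
    fix z assume "z \<in> C"
    then obtain u1 u2 where u1: "u1 \<in> carrier_vec n" and u2: "u2 \<in> carrier_vec n"
      and z: "z = cw n M1 u1 @\<^sub>v cw n M2 u2" unfolding C_def prodc_def C1 C2 by blast
    define u where "u = u1 @\<^sub>v u2"
    have uc: "u \<in> carrier_vec (2 * n)" using u1 u2 unfolding u_def by (simp add: mult_2)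
    have "vec n (\<lambda>i. u $ i) = u1" unfolding u_def by (rule take_app[OF u1 u2])
    moreover have "vec n (\<lambda>i. u $ (n + i)) = u2" unfolding u_def by (rule drop_app[OF u1 u2])
    ultimately have "L u = z" unfolding L_def z by simp
    thus "z \<in> L ` carrier_vec (2 * n)" using uc by blast
  qed
  have lin: "linear_code (4 * n) (2 * n) C"
    unfolding n4 LC[symmetric] by (rule lin_img_code[OF Lc Ladd Lsm Linj])
  have nz1: "\<exists>x\<in>C1. hweight x \<noteq> 0"
  proof -
    have "cw n M1 (unit_vec n 0) \<in> C1" using C1 by simp
    moreover have one: "cw n M1 (unit_vec n 0) $ 0 = 1" using assms(1) by (simp add: cw_first)
    moreover have "cw n M1 (unit_vec n 0) \<noteq> 0\<^sub>v (2 * n)"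
    proof
      assume "cw n M1 (unit_vec n 0) = 0\<^sub>v (2 * n)"
      hence "cw n M1 (unit_vec n 0) $ 0 = 0\<^sub>v (2 * n) $ 0" by simp
      also have "\<dots> = 0" using assms(1) by simp
      finally show False using one by simp
    qed
    ultimately show ?thesis using hweight_zero_iff[OF cw_carrier] by blast
  qed
  have nz2: "\<exists>x\<in>C2. hweight x \<noteq> 0"
  proof -
    have "cw n M2 (unit_vec n 0) \<in> C2" using C2 by simp
    moreover have one: "cw n M2 (unit_vec n 0) $ 0 = 1" using assms(1) by (simp add: cw_first)
    moreover have "cw n M2 (unit_vec n 0) \<noteq> 0\<^sub>v (2 * n)"
    proof
      assume "cw n M2 (unit_vec n 0) = 0\<^sub>v (2 * n)"
      hence "cw n M2 (unit_vec n 0) $ 0 = 0\<^sub>v (2 * n) $ 0" by simp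
      also have "\<dots> = 0" using assms(1) by simp
      finally show False using one by simp
    qed
    ultimately show ?thesis using hweight_zero_iff[OF cw_carrier] by blast
  qed
  have md: "min_dist C = min d1 d2"
    unfolding C_def using min_dist_prod[OF C1c C2c C10 C20 nz1 nz2] assms(7,9) by simp
  have D1c: "euclid_dual (2 * n) C1 \<subseteq> carrier_vec (2 * n)" unfolding euclid_dual_def by auto
  have D2c: "euclid_dual (2 * n) C2 \<subseteq> carrier_vec (2 * n)" unfolding euclid_dual_def by auto
  have weq: "wequiv C (euclid_dual (4 * n) C)"
    unfolding n4 C_def dual_prod[OF C1c C2c C10 C20]
    by (rule wequiv_prod[OF C1c C2c D1c D2c]) (use single_wequiv[OF P1] single_wequiv[OF P2] C1 C2 in auto)
  have fe: "fsd_euclid (4 * n) C" unfolding fsd_euclid_def using wequiv_wd[OF weq] by blast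
  have fh: "fsd_herm (p ^ (h div 2)) (4 * n) C"
    if p: "prime p" and h: "even h" and card: "card (UNIV :: 'a set) = p ^ h" for p h
  proof -
    let ?r = "p ^ (h div 2)"
    have r: "?r > 0" using p by (simp add: prime_gt_0_nat)
    have inv: "(x ^ ?r) ^ ?r = x" for x :: 'a
    proof -
      have hh: "h div 2 + h div 2 = h" using h by auto
      have "?r * ?r = p ^ h" by (simp add: hh flip: power_add)
      hence "(x ^ ?r) ^ ?r = x ^ card (UNIV :: 'a set)" by (simp add: card flip: power_mult)
      thus ?thesis by (simp add: fermat_field)
    qed
    have "wequiv (euclid_dual (4 * n) C) (herm_dual ?r (4 * n) C)" by (rule herm_wequiv[OF r inv])
    thus ?thesis unfolding fsd_herm_def using wequiv_wd[OF weq] wequiv_wd by metis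
  qed
  show ?thesis using lin md fe fh by blast
qed

end
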